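(* Let $m\ge 2$ be even, $n\ge1$, and let $\mathcal{T}=(t_{i_1\cdots i_m})\in\mathbb{R}^{[m,n]}$ be a Nekrasov $Z$ tensor with all diagonal elements $t_{i\cdots i}>0$. Let $$W=\mathrm{diag}(w_1,\dots,w_n),\qquad w_i=\Big(\frac{\Lambda_i(\mathcal{T})}{t_{i i\cdots i}}\Big)^{\frac{1}{m-1}}.$$ Then the tensor $\mathcal{T}W=(b_{i_1\cdots i_m})$, with entries $b_{i_1 i_2\cdots i_m}=t_{i_1 i_2\cdots i_m}w_{i_2}\cdots w_{i_m}$, is a diagonally dominant $Z$ tensor, i.e. all its off-diagonal entries are nonpositive and $|b_{i\cdots i}|\ge\sum_{(i_2,\dots,i_m)\neq(i,\dots,i)}|b_{i i_2\cdots i_m}|$ for all $i\in[n]$.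
   Context: $[n]=\{1,\dots,n\}$ and $\mathbb{R}^{[m,n]}$ denotes the set of real tensors $\mathcal{T}=(t_{i_1\cdots i_m})$ with $i_1,\dots,i_m\in[n]$. A diagonal element is $t_{i\cdots i}$; all other entries are off-diagonal. $\mathcal{T}$ is a $Z$ tensor if all its off-diagonal entries are nonpositive. For $\mathcal{T}$ with $t_{i\cdots i}\neq 0$ for all $i$, define $R_i(\mathcal{T})=\sum_{(i_2,\dots,i_m)\neq(i,\dots,i)}|t_{i i_2\cdots i_m}|$, $\Lambda_1(\mathcal{T})=R_1(\mathcal{T})$, and for $i=2,\dots,n$ $$\Lambda_i(\mathcal{T})=\sum_{(i_2,\dots,i_m)\in[i-1]^{m-1}}|t_{i i_2\cdots i_m}|\Big(\tfrac{\Lambda_{i_2}(\mathcal{T})}{|t_{i_2\cdots i_2}|}\Big)^{\frac{1}{m-1}}\cdots\Big(\tfrac{\Lambda_{i_m}(\mathcal{T})}{|t_{i_m\cdots i_m}|}\Big)^{\frac{1}{m-1}}+\sum_{(i_2,\dots,i_m)\notin[i-1]^{m-1},\ (i_2,\dots,i_m)\neq(i,\dots,i)}|t_{i i_2\cdots i_m}|.$$ $\mathcal{T}$ is a Nekrasov tensor if $|t_{i\cdots i}|>\Lambda_i(\mathcal{T})$ for all $i\in[n]$; a Nekrasov $Z$ tensor is one that is both a Nekrasov tensor and a $Z$ tensor. A tensor $\mathcal{B}=(b_{i_1\cdots i_m})$ is diagonally dominant if $|b_{i\cdots i}|\ge\sum_{(i_2,\dots,i_m)\neq(i,\dots,i)}|b_{i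 i_2\cdots i_m}|$ for every $i$. The product $\mathcal{T}W$ of a tensor with a diagonal matrix is the general tensor product of Shao, which here gives the entry formula stated in the claim. *)

theory Defs
  imports Complex_Main
begin

text \<open>A tensor of order m and dimension n is a real function on index lists;
  only index lists of length m with entries in {1..n} are relevant.
  Entry t_{i1...im} is T [i1,...,im].\<close>

type_synonym tensor = "nat list \<Rightarrow> real"

definition tuples :: "nat \<Rightarrow> nat \<Rightarrow> nat list set" where
  "tuples k n = {xs. length xs = k \<and> set xs \<subseteq> {1..n}}"

definition diag_entry :: "nat \<Rightarrow> tensor \<Rightarrow> nat \<Rightarrow> real" where
  "diag_entry m T i = T (replicate m i)"

definition Z_tensor :: "nat \<Rightarrow> nat \<Rightarrow> tensor \<Rightarrow> bool" where
  "Z_tensor m n T \<longleftrightarrow>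
     (\<forall>idx \<in> tuples m n. (\<forall>k. idx \<noteq> replicate m k) \<longrightarrow> T idx \<le> 0)"

definition Rsum :: "nat \<Rightarrow> nat \<Rightarrow> tensor \<Rightarrow> nat \<Rightarrow> real" where
  "Rsum m n T i = (\<Sum>xs \<in> {xs \<in> tuples (m-1) n. xs \<noteq> replicate (m-1) i}. \<bar>T (i # xs)\<bar>)"

text \<open>Lam_upto m n T k gives the values Lambda_1, ..., Lambda_k (at arguments 1..k).\<close>
primrec Lam_upto :: "nat \<Rightarrow> nat \<Rightarrow> tensor \<Rightarrow> nat \<Rightarrow> (nat \<Rightarrow> real)" where
  "Lam_upto m n T 0 = (\<lambda>_. 0)"
| "Lam_upto m n T (Suc k) =
     (let L = Lam_upto m n T k; i = Suc k in
      L(i := (if i = 1 then Rsum m n T 1 else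
        (\<Sum>xs \<in> tuples (m-1) (i-1).
            \<bar>T (i # xs)\<bar> *
            (\<Prod>j\<leftarrow>xs. (L j / \<bar>diag_entry m T j\<bar>) powr (1 / (real m - 1))))
        + (\<Sum>xs \<in> {xs \<in> tuples (m-1) n. xs \<notin> tuples (m-1) (i-1)
                       \<and> xs \<noteq> replicate (m-1) i}. \<bar>T (i # xs)\<bar>))))"

definition Lambda :: "nat \<Rightarrow> nat \<Rightarrow> tensor \<Rightarrow> nat \<Rightarrow> real" where
  "Lambda m n T i = Lam_upto m n T i i"

definition nekrasov :: "nat \<Rightarrow> nat \<Rightarrow> tensor \<Rightarrow> bool" where
  "nekrasov m n T \<longleftrightarrow>
     (\<forall>i \<in> {1..n}. diag_entry m T i \<noteq> 0 \<and> \<bar>diag_entry m T i\<bar> > Lambda m n T i)"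

definition nekrasov_Z :: "nat \<Rightarrow> nat \<Rightarrow> tensor \<Rightarrow> bool" where
  "nekrasov_Z m n T \<longleftrightarrow> nekrasov m n T \<and> Z_tensor m n T"

definition diag_dominant :: "nat \<Rightarrow> nat \<Rightarrow> tensor \<Rightarrow> bool" where
  "diag_dominant m n B \<longleftrightarrow>
     (\<forall>i \<in> {1..n}. \<bar>diag_entry m B i\<bar> \<ge>
        (\<Sum>xs \<in> {xs \<in> tuples (m-1) n. xs \<noteq> replicate (m-1) i}. \<bar>B (i # xs)\<bar>))"

definition tensor_diag_mult :: "tensor \<Rightarrow> (nat \<Rightarrow> real) \<Rightarrow> tensor" where
  "tensor_diag_mult T w = (\<lambda>idx. T idx * (\<Prod>j\<leftarrow>tl idx. w j))"

end

theory Submission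
  imports Defs
begin

lemma finite_tuples: "finite (tuples k n)"
proof -
  have "tuples k n = {xs. set xs \<subseteq> {1..n} \<and> length xs = k}"
    unfolding tuples_def by auto
  thus ?thesis using finite_lists_length_eq[of "{1..n}" k] by simp
qed

lemma Lam_upto_stable: "j \<le> k \<Longrightarrow> Lam_upto m n T k j = Lambda m n T j"
proof (induction k)
  case 0 thus ?case by (simp add: Lambda_def)
next
  case (Suc k)
  show ?case
  proof (cases "j = Suc k")
    case True thus ?thesis by (simp add: Lambda_def)
  next
    case False
    hence "j \<le> k" using Suc.prems by simp
    thus ?thesis using Suc.IH False by (simp add: Let_def)
  qed
qed

lemma Lam_upto_nonneg: "Lam_upto m n T k j \<ge> 0"
proof (induction k arbitrary: j)
  case 0 thus ?case by simp
next
  case (Suc k)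
  have "0 \<le> (\<Sum>xs \<in> tuples (m-1) k.
            \<bar>T (Suc k # xs)\<bar> *
            (\<Prod>j\<leftarrow>xs. (Lam_upto m n T k j / \<bar>diag_entry m T j\<bar>) powr (1 / (real m - 1))))"
    by (intro sum_nonneg mult_nonneg_nonneg prod_list_nonneg) auto
  moreover have "0 \<le> Rsum m n T 1" unfolding Rsum_def by (intro sum_nonneg) auto
  moreover have "0 \<le> (\<Sum>xs \<in> {xs \<in> tuples (m-1) n. xs \<notin> tuples (m-1) k
                       \<and> xs \<noteq> replicate (m-1) (Suc k)}. \<bar>T (Suc k # xs)\<bar>)"
    by (intro sum_nonneg) auto
  ultimately show ?case using Suc.IH by (auto simp: Let_def)
qed

lemma Lambda_nonneg: "Lambda m n T j \<ge> 0"
  unfolding Lambda_def by (rule Lam_upto_nonneg)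

lemma prod_list_ge0: "\<forall>x\<in>set xs. 0 \<le> f x \<Longrightarrow> prod_list (map f xs) \<ge> (0::real)"
  by (induction xs) auto

lemma prod_list_le1: "\<forall>x\<in>set xs. 0 \<le> f x \<and> f x \<le> (1::real) \<Longrightarrow> prod_list (map f xs) \<le> 1"
proof (induction xs)
  case (Cons a xs)
  have "0 \<le> prod_list (map f xs)" using Cons.prems by (intro prod_list_nonneg) auto
  thus ?case using Cons by (auto intro: mult_le_one)
qed simp

theorem mainTheorem2:
  fixes m n :: nat and T :: tensor and w :: "nat \<Rightarrow> real"
  assumes "m \<ge> 2" and "even m" and "n \<ge> 1"
    and "nekrasov_Z m n T"
    and "\<forall>i \<in> {1..n}. diag_entry m T i > 0"
    and "\<forall>i \<in> {1..n}. w i = (Lambda m n T i / diag_entry m T i) powr (1 / (real m - 1))"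
  shows "Z_tensor m n (tensor_diag_mult T w) \<and> diag_dominant m n (tensor_diag_mult T w)"
proof -
  note m2 = assms(1)
  have nek: "\<And>i. i \<in> {1..n} \<Longrightarrow> Lambda m n T i < diag_entry m T i"
    using assms(4,5) unfolding nekrasov_Z_def nekrasov_def by force
  have Z: "Z_tensor m n T" using assms(4) unfolding nekrasov_Z_def by simp
  have w0: "\<And>i. i \<in> {1..n} \<Longrightarrow> 0 \<le> w i" using assms(6) by simp
  have w1: "\<And>i. i \<in> {1..n} \<Longrightarrow> w i \<le> 1"
  proof -
    fix i assume i: "i \<in> {1..n}"
    have d: "diag_entry m T i > 0" using assms(5) i by simp
    have "Lambda m n T i / diag_entry m T i \<le> 1" using nek[OF i] d by simp
    moreover have "0 \<le> Lambda m n T i / diag_entry m T i" using d Lambda_nonneg[of m n T i] by simp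
    moreover have "1 / (real m - 1) > 0" using m2 by simp
    ultimately show "w i \<le> 1" using assms(6) i using powr_mono2[of "1 / (real m - 1)" "Lambda m n T i / diag_entry m T i" 1] by simp
  qed
  have prodw: "\<And>xs. set xs \<subseteq> {1..n} \<Longrightarrow> 0 \<le> (\<Prod>j\<leftarrow>xs. w j) \<and> (\<Prod>j\<leftarrow>xs. w j) \<le> 1"
    using w0 w1 prod_list_ge0 prod_list_le1 by (metis subsetD)
  have part1: "Z_tensor m n (tensor_diag_mult T w)"
    unfolding Z_tensor_def tensor_diag_mult_def
  proof (intro ballI impI)
    fix idx assume idx: "idx \<in> tuples m n" and nd: "\<forall>k. idx \<noteq> replicate m k"
    have "T idx \<le> 0" using Z idx nd unfolding Z_tensor_def by blast
    moreover have "set (tl idx) \<subseteq> {1..n}" using idx unfolding tuples_def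
      by (metis list.set_sel(2) mem_Collect_eq subsetD subsetI tl_Nil)
    ultimately show "T idx * (\<Prod>j\<leftarrow>tl idx. w j) \<le> 0"
      using prodw by (simp add: mult_nonpos_nonneg)
  qed
  have part2: "diag_dominant m n (tensor_diag_mult T w)"
    unfolding diag_dominant_def
  proof (intro ballI)
    fix i assume i: "i \<in> {1..n}"
    define S where "S = {xs \<in> tuples (m-1) n. xs \<noteq> replicate (m-1) i}"
    have d: "diag_entry m T i > 0" using assms(5) i by simp
    have wpow: "w i ^ (m-1) = Lambda m n T i / diag_entry m T i"
    proof (cases "Lambda m n T i = 0")
      case True thus ?thesis using assms(6) i m2 by simp
    next
      case False
      hence "Lambda m n T i / diag_entry m T i \<noteq> 0" using d by simp
      hence "w i ^ (m-1) = (Lambda m n T i / diag_entry m T i) powr (real (m-1) * (1 / (real m - 1)))"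
        using assms(6) i by (simp add: powr_power)
      also have "real (m-1) * (1 / (real m - 1)) = 1" using m2 by (simp add: of_nat_diff)
      finally show ?thesis using d Lambda_nonneg[of m n T i] by simp
    qed
    have diagB: "\<bar>diag_entry m (tensor_diag_mult T w) i\<bar> = Lambda m n T i"
    proof -
      have "tl (replicate m i) = replicate (m-1) i" by (cases m) auto
      hence "diag_entry m (tensor_diag_mult T w) i = diag_entry m T i * w i ^ (m-1)"
        unfolding diag_entry_def tensor_diag_mult_def by (simp add: prod_list_replicate)
      thus ?thesis using wpow d Lambda_nonneg[of m n T i] by simp
    qed
    have Bxs: "\<And>xs. xs \<in> S \<Longrightarrow> \<bar>tensor_diag_mult T w (i # xs)\<bar> = \<bar>T (i # xs)\<bar> * (\<Prod>j\<leftarrow>xs. w j)"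
      unfolding tensor_diag_mult_def S_def tuples_def using prodw by (simp add: abs_mult)
    have le1: "\<And>xs. xs \<in> S \<Longrightarrow> \<bar>T (i # xs)\<bar> * (\<Prod>j\<leftarrow>xs. w j) \<le> \<bar>T (i # xs)\<bar>"
      unfolding S_def tuples_def using prodw by (simp add: mult_left_le)
    have finS: "finite S" unfolding S_def using finite_tuples by simp
    have "(\<Sum>xs\<in>S. \<bar>tensor_diag_mult T w (i # xs)\<bar>) \<le> Lambda m n T i"
    proof (cases "i = 1")
      case True
      have "(\<Sum>xs\<in>S. \<bar>tensor_diag_mult T w (i # xs)\<bar>) = (\<Sum>xs\<in>S. \<bar>T (i # xs)\<bar> * (\<Prod>j\<leftarrow>xs. w j))"
        using Bxs by simp
      also have "\<dots> \<le> (\<Sum>xs\<in>S. \<bar>T (i # xs)\<bar>)" using le1 by (intro sum_mono) auto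
      also have "\<dots> = Lambda m n T i" using True unfolding S_def Lambda_def by (simp add: Rsum_def)
      finally show ?thesis .
    next
      case False
      then obtain k where k: "i = Suc k" "k \<ge> 1" using i by (cases i) auto
      define A where "A = tuples (m-1) (i-1)"
      define C where "C = {xs \<in> tuples (m-1) n. xs \<notin> tuples (m-1) (i-1) \<and> xs \<noteq> replicate (m-1) i}"
      have AS: "A \<subseteq> S"
      proof
        fix xs assume xs: "xs \<in> A"
        hence "length xs = m - 1" "set xs \<subseteq> {1..i-1}" unfolding A_def tuples_def by auto
        moreover have "xs \<noteq> replicate (m-1) i"
        proof
          assume "xs = replicate (m-1) i"
          hence "i \<in> set xs" using m2 by simp
          thus False using \<open>set xs \<subseteq> {1..i-1}\<close> k by auto
        qed
        moreover have "{1..i-1} \<subseteq> {1..n}" using i by auto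
        hence "set xs \<subseteq> {1..n}" using \<open>set xs \<subseteq> {1..i-1}\<close> by (rule order_trans[rotated])
        ultimately show "xs \<in> S" unfolding S_def tuples_def by auto
      qed
      have SAC: "S = A \<union> C" "A \<inter> C = {}" using AS unfolding S_def C_def A_def by auto
      have finA: "finite A" "finite C" using finS SAC by auto
      have LamE: "Lambda m n T i = (\<Sum>xs \<in> A. \<bar>T (i # xs)\<bar> *
            (\<Prod>j\<leftarrow>xs. (Lam_upto m n T k j / \<bar>diag_entry m T j\<bar>) powr (1 / (real m - 1))))
            + (\<Sum>xs \<in> C. \<bar>T (i # xs)\<bar>)"
        using k unfolding Lambda_def A_def C_def by (simp add: Let_def)
      have Aeq: "\<And>xs. xs \<in> A \<Longrightarrow> (\<Prod>j\<leftarrow>xs. (Lam_upto m n T k j / \<bar>diag_entry m T j\<bar>) powr (1 / (real m - 1)))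
                  = (\<Prod>j\<leftarrow>xs. w j)"
      proof -
        fix xs assume "xs \<in> A"
        hence sx: "set xs \<subseteq> {1..k}" unfolding A_def tuples_def using k by auto
        show "?thesis xs"
        proof (intro arg_cong[where f=prod_list] map_cong refl)
          fix j assume "j \<in> set xs"
          hence j: "j \<in> {1..k}" "j \<in> {1..n}" using sx k i by auto
          have "Lam_upto m n T k j = Lambda m n T j" using j by (intro Lam_upto_stable) auto
          moreover have "\<bar>diag_entry m T j\<bar> = diag_entry m T j" using assms(5) j(2) by (meson abs_of_pos)
          ultimately show "(Lam_upto m n T k j / \<bar>diag_entry m T j\<bar>) powr (1 / (real m - 1)) = w j"
            using assms(6) j by simp
        qed
      qed
      have "(\<Sum>xs\<in>S. \<bar>tensor_diag_mult T w (i # xs)\<bar>) = (\<Sum>xs\<in>S. \<bar>T (i # xs)\<bar> * (\<Prod>j\<leftarrow>xs. w j))"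
        using Bxs by simp
      also have "\<dots> = (\<Sum>xs\<in>A. \<bar>T (i # xs)\<bar> * (\<Prod>j\<leftarrow>xs. w j)) + (\<Sum>xs\<in>C. \<bar>T (i # xs)\<bar> * (\<Prod>j\<leftarrow>xs. w j))"
        using SAC finA by (simp add: sum.union_disjoint)
      also have "\<dots> \<le> (\<Sum>xs\<in>A. \<bar>T (i # xs)\<bar> * (\<Prod>j\<leftarrow>xs. w j)) + (\<Sum>xs\<in>C. \<bar>T (i # xs)\<bar>)"
        using le1 SAC by (intro add_left_mono sum_mono) auto
      also have "\<dots> = Lambda m n T i" using LamE Aeq by simp
      finally show ?thesis .
    qed
    thus "(\<Sum>xs \<in> {xs \<in> tuples (m-1) n. xs \<noteq> replicate (m-1) i}. \<bar>tensor_diag_mult T w (i # xs)\<bar>)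
          \<le> \<bar>diag_entry m (tensor_diag_mult T w) i\<bar>"
      using diagB unfolding S_def by simp
  qed
  show ?thesis using part1 part2 by simp
qed

end
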